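(* Let $K$ be a skew field, $V$ a left (topological) $K$-vector space with basis $v^0,v^1,\ldots$, $V'$ the dual right (topological) $K$-vector space with basis $p_0,p_1,\ldots$, with pairing $(\cdot,\cdot)$; let $\mathbf f\in V$, $\mathbf g\in V'$, and put $y_i^k=(v^k,p_i)$, $f_i=(\mathbf f,p_i)$, $g^k=(v^k,\mathbf g)$. Assume the matrix $D=(y_i^k)$ is generic. Then, with the difference derivatives defined as in the context: (a) $(\Delta_R^0 f)_i^k=f_i(y_i^k)^{-1}$, $(\Delta_R^1 f)_{ii'}^{kk'}=\big((\Delta_R^0 f)_i^k-(\Delta_R^0 f)_{i'}^k\big)\big((\Delta_R^0 y^{k'})_i^k-(\Delta_R^0 y^{k'})_{i'}^k\big)^{-1}$, and for $m\ge1$ $$(\Delta_R^m f)_{i_0\ldots i_m}^{k_0\ldots k_m}=\big((\Delta_R^{m-1}f)_{i_0\ldots i_{m-1}}^{k_0\ldots k_{m-1}}-(\Delta_R^{m-1}f)_{i_0\ldots i_{m-2}i_m}^{k_0\ldots k_{m-1}}\big)\big((\Delta_R^{m-1}y^{k_m})_{i_0\ldots i_{m-1}}^{k_0\ldots k_{m-1}}-(\Delta_R^{m-1}y^{k_m})_{i_0\ldots i_{m-2}i_m}^{k_0\ldots k_{m-1}}\big)^{-1}.$$ (b) $(\Delta_L^0 g)_i^k=(y_i^k)^{-1}g^k$, $(\Delta_L^1 g)_{ii'}^{kk'}=\big((\Delta_L^0 y_{i'})_i^k-(\Delta_L^0 y_{i'})_i^{k'}\big)^{-1}\big((\Delta_L^0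 g)_i^k-(\Delta_L^0 g)_i^{k'}\big)$, and for $m\ge1$ $$(\Delta_L^m g)_{i_0\ldots i_m}^{k_0\ldots k_m}=\big((\Delta_L^{m-1}y_{i_m})_{i_0\ldots i_{m-1}}^{k_0\ldots k_{m-1}}-(\Delta_L^{m-1}y_{i_m})_{i_0\ldots i_{m-1}}^{k_0\ldots k_{m-2}k_m}\big)^{-1}\big((\Delta_L^{m-1}g)_{i_0\ldots i_{m-1}}^{k_0\ldots k_{m-1}}-(\Delta_L^{m-1}g)_{i_0\ldots i_{m-1}}^{k_0\ldots k_{m-2}k_m}\big).$$
   Context: The pairing $(\cdot,\cdot):V\times V'\to K$ is biadditive with $(\lambda v,p\mu)=\lambda(v,p)\mu$. $D$ is the infinite matrix with entry $y_i^k$ in row $k$, column $i$; $y^k=(y_0^k,y_1^k,\ldots)$ is its $k$-th row and $y_i=(y_i^0,y_i^1,\ldots)$ its $i$-th column; $f=(f_i)$ and $g=(g^k)$. Difference derivatives: let $i_0,i_1,\ldots$ and $k_0,k_1,\ldots$ be permutations of $\{0,1,2,\ldots\}$. For generic $D$ there are unique upper triangular $A=(a_m^j)$ ($a_m^j=0$ for $j>m$) and lower triangular $C=(c_l^m)$ ($c_l^m=0$ for $l>m$) such that $q_m=\sum_{j=0}^m p_{i_j}a_m^j$ and $w^m=\sum_{l=0}^m c_l^m v^{k_l}$ satisfy $(w^m,q_{m'})=0$ for $m\neq m'$ and $(w^m,p_{i_m})=(v^{k_m},q_m)=1$. Equivalently, $q_m$ is the unique right linear combination of $p_{i_0},\ldots,p_{i_m}$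 with $(v^{k_l},q_m)=0$ for $l<m$ and $(v^{k_m},q_m)=1$, and $w^m$ is the unique left linear combination of $v^{k_0},\ldots,v^{k_m}$ with $(w^m,p_{i_j})=0$ for $j<m$ and $(w^m,p_{i_m})=1$; so these depend only on $i_0,\ldots,i_m,k_0,\ldots,k_m$. Define the $m$-th right and left difference derivatives $(\Delta_R^m f)_{i_0\ldots i_m}^{k_0\ldots k_m}=\sum_{j=0}^m f_{i_j}a_m^j=(\mathbf f,q_m)$ and $(\Delta_L^m g)_{i_0\ldots i_m}^{k_0\ldots k_m}=\sum_{l=0}^m c_l^m g^{k_l}=(w^m,\mathbf g)$; these notations are used for any sequences of pairwise distinct indices. The expression $\Delta_R^m y^{k}$ means $\Delta_R^m f$ with $f$ replaced by the row $y^k$ (i.e. $\mathbf f$ replaced by $v^k$), and $\Delta_L^m y_i$ means $\Delta_L^m g$ with $g$ replaced by the column $y_i$ (i.e. $\mathbf g$ replaced by $p_i$). Genericity means all finite square submatrices of $D$ and all elements of $K$ that need to be inverted are invertible. *)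

theory Defs
  imports Main
begin

text \<open>The matrix D is given by y :: nat => nat => K with y k i = y_i^k = (v^k, p_i)
  (row index k first, column index i second). f i = f_i = (f, p_i),
  g k = g^k = (v^k, g).\<close>

definition sq_invertible :: "nat \<Rightarrow> (nat \<Rightarrow> nat \<Rightarrow> 'a::division_ring) \<Rightarrow> bool" where
  "sq_invertible n M \<longleftrightarrow> (\<exists>B.
     (\<forall>a<n. \<forall>b<n. (\<Sum>c<n. M a c * B c b) = (if a = b then 1 else 0)) \<and>
     (\<forall>a<n. \<forall>b<n. (\<Sum>c<n. B a c * M c b) = (if a = b then 1 else 0)))"

definition generic :: "(nat \<Rightarrow> nat \<Rightarrow> 'a::division_ring) \<Rightarrow> bool" where
  "generic y \<longleftrightarrow> (\<forall>is ks. length is = length ks \<longrightarrow> distinct is \<longrightarrow> distinct ks \<longrightarrow>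
      sq_invertible (length is) (\<lambda>l j. y (ks ! l) (is ! j)))"

text \<open>Coefficients a_m^0..a_m^m of q_m = sum_j p_{i_j} a_m^j, characterised by
  (v^{k_l}, q_m) = sum_j y_{i_j}^{k_l} a_m^j = 0 for l < m and = 1 for l = m.\<close>
definition coeffR :: "(nat \<Rightarrow> nat \<Rightarrow> 'a::division_ring) \<Rightarrow> nat list \<Rightarrow> nat list \<Rightarrow> 'a list" where
  "coeffR y is ks = (THE a. length a = length is \<and>
     (\<forall>l<length ks. (\<Sum>j<length is. y (ks ! l) (is ! j) * a ! j)
        = (if l = length ks - 1 then 1 else 0)))"

text \<open>Coefficients c_0^m..c_m^m of w^m = sum_l c_l^m v^{k_l}, characterised by
  (w^m, p_{i_j}) = sum_l c_l^m y_{i_j}^{k_l} = 0 for j < m and = 1 for j = m.\<close>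
definition coeffL :: "(nat \<Rightarrow> nat \<Rightarrow> 'a::division_ring) \<Rightarrow> nat list \<Rightarrow> nat list \<Rightarrow> 'a list" where
  "coeffL y is ks = (THE c. length c = length ks \<and>
     (\<forall>j<length is. (\<Sum>l<length ks. c ! l * y (ks ! l) (is ! j))
        = (if j = length is - 1 then 1 else 0)))"

text \<open>Right difference derivative (Delta_R^m f)_{i_0..i_m}^{k_0..k_m} = sum_j f_{i_j} a_m^j,
  with m = length is - 1.\<close>
definition DeltaR :: "(nat \<Rightarrow> nat \<Rightarrow> 'a::division_ring) \<Rightarrow> (nat \<Rightarrow> 'a) \<Rightarrow> nat list \<Rightarrow> nat list \<Rightarrow> 'a" where
  "DeltaR y f is ks = (\<Sum>j<length is. f (is ! j) * coeffR y is ks ! j)"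

definition DeltaL :: "(nat \<Rightarrow> nat \<Rightarrow> 'a::division_ring) \<Rightarrow> (nat \<Rightarrow> 'a) \<Rightarrow> nat list \<Rightarrow> nat list \<Rightarrow> 'a" where
  "DeltaL y g is ks = (\<Sum>l<length ks. coeffL y is ks ! l * g (ks ! l))"

end

theory Submission
  imports Defs
begin


lemma kerR:
  fixes M :: "nat \<Rightarrow> nat \<Rightarrow> 'a::division_ring"
  assumes "sq_invertible n M" "\<forall>l<n. (\<Sum>j<n. M l j * x j) = 0" "j < n"
  shows "x j = 0"
proof -
  obtain B where B: "\<forall>a<n. \<forall>b<n. (\<Sum>c<n. B a c * M c b) = (if a = b then 1 else 0)"
    using assms(1) unfolding sq_invertible_def by blast
  have "x j = (\<Sum>c<n. if j = c then x c else 0)"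
    using assms(3) by (simp add: sum.delta)
  also have "\<dots> = (\<Sum>c<n. (if j = c then 1 else 0) * x c)"
    by (intro sum.cong) auto
  also have "\<dots> = (\<Sum>c<n. (\<Sum>d<n. B j d * M d c) * x c)"
    using B assms(3) by (intro sum.cong) auto
  also have "\<dots> = (\<Sum>c<n. \<Sum>d<n. B j d * M d c * x c)"
    by (simp add: sum_distrib_right)
  also have "\<dots> = (\<Sum>d<n. \<Sum>c<n. B j d * M d c * x c)"
    by (rule sum.swap)
  also have "\<dots> = (\<Sum>d<n. B j d * (\<Sum>c<n. M d c * x c))"
    by (simp add: sum_distrib_left mult.assoc)
  also have "\<dots> = 0" using assms(2) by simp
  finally show ?thesis .
qed

lemma exR:
  fixes M :: "nat \<Rightarrow> nat \<Rightarrow> 'a::division_ring"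
  assumes "sq_invertible n M"
  shows "\<exists>x. \<forall>l<n. (\<Sum>j<n. M l j * x j) = (if l = n - 1 then 1 else 0)"
proof -
  obtain B where B: "\<forall>a<n. \<forall>b<n. (\<Sum>c<n. M a c * B c b) = (if a = b then 1 else 0)"
    using assms(1) unfolding sq_invertible_def by blast
  show ?thesis
  proof (cases "n = 0")
    case False
    then show ?thesis using B by (intro exI[of _ "\<lambda>j. B j (n - 1)"]) auto
  qed simp
qed

lemma kerL:
  fixes M :: "nat \<Rightarrow> nat \<Rightarrow> 'a::division_ring"
  assumes "sq_invertible n M" "\<forall>j<n. (\<Sum>l<n. x l * M l j) = 0" "j < n"
  shows "x j = 0"
proof -
  obtain B where B: "\<forall>a<n. \<forall>b<n. (\<Sum>c<n. M a c * B c b) = (if a = b then 1 else 0)"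
    using assms(1) unfolding sq_invertible_def by blast
  have "x j = (\<Sum>c<n. if j = c then x c else 0)"
    using assms(3) by (simp add: sum.delta)
  also have "\<dots> = (\<Sum>c<n. x c * (if c = j then 1 else 0))"
    by (intro sum.cong) auto
  also have "\<dots> = (\<Sum>c<n. x c * (\<Sum>d<n. M c d * B d j))"
    using B assms(3) by (intro sum.cong) auto
  also have "\<dots> = (\<Sum>c<n. \<Sum>d<n. x c * M c d * B d j)"
    by (simp add: sum_distrib_left mult.assoc)
  also have "\<dots> = (\<Sum>d<n. \<Sum>c<n. x c * M c d * B d j)"
    by (rule sum.swap)
  also have "\<dots> = (\<Sum>d<n. (\<Sum>c<n. x c * M c d) * B d j)"
    by (simp add: sum_distrib_right)
  also have "\<dots> = 0" using assms(2) by simp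
  finally show ?thesis .
qed

lemma exL:
  fixes M :: "nat \<Rightarrow> nat \<Rightarrow> 'a::division_ring"
  assumes "sq_invertible n M"
  shows "\<exists>x. \<forall>j<n. (\<Sum>l<n. x l * M l j) = (if j = n - 1 then 1 else 0)"
proof -
  obtain B where B: "\<forall>a<n. \<forall>b<n. (\<Sum>c<n. B a c * M c b) = (if a = b then 1 else 0)"
    using assms(1) unfolding sq_invertible_def by blast
  show ?thesis
  proof (cases "n = 0")
    case False
    then show ?thesis using B by (intro exI[of _ "\<lambda>l. B (n - 1) l"]) auto
  qed simp
qed

definition solR :: "(nat \<Rightarrow> nat \<Rightarrow> 'a::division_ring) \<Rightarrow> nat list \<Rightarrow> nat list \<Rightarrow> 'a list \<Rightarrow> bool" where
  "solR y is ks a \<longleftrightarrow> length a = length is \<and>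
     (\<forall>l<length ks. (\<Sum>j<length is. y (ks ! l) (is ! j) * a ! j)
        = (if l = length ks - 1 then 1 else 0))"

definition solL :: "(nat \<Rightarrow> nat \<Rightarrow> 'a::division_ring) \<Rightarrow> nat list \<Rightarrow> nat list \<Rightarrow> 'a list \<Rightarrow> bool" where
  "solL y is ks c \<longleftrightarrow> length c = length ks \<and>
     (\<forall>j<length is. (\<Sum>l<length ks. c ! l * y (ks ! l) (is ! j))
        = (if j = length is - 1 then 1 else 0))"

lemma genR:
  assumes "generic y" "distinct is" "distinct ks" "length is = length ks"
    "\<forall>l<length ks. (\<Sum>j<length is. y (ks ! l) (is ! j) * x j) = 0" "j < length is"
  shows "x j = 0"
proof -
  have "sq_invertible (length is) (\<lambda>l j. y (ks ! l) (is ! j))"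
    using assms(1-4) unfolding generic_def by blast
  then show ?thesis using kerR[of "length is" "\<lambda>l j. y (ks ! l) (is ! j)" x j] assms(4-6) by simp
qed

lemma genL:
  assumes "generic y" "distinct is" "distinct ks" "length is = length ks"
    "\<forall>j<length is. (\<Sum>l<length ks. x l * y (ks ! l) (is ! j)) = 0" "l < length ks"
  shows "x l = 0"
proof -
  have "sq_invertible (length is) (\<lambda>l j. y (ks ! l) (is ! j))"
    using assms(1-4) unfolding generic_def by blast
  then show ?thesis using kerL[of "length is" "\<lambda>l j. y (ks ! l) (is ! j)" x l] assms(4-6) by simp
qed

lemma coeffR_char:
  assumes "generic y" "distinct is" "distinct ks" "length is = length ks"
  shows "solR y is ks (coeffR y is ks) \<and> (\<forall>a. solR y is ks a \<longrightarrow> coeffR y is ks = a)"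
proof -
  have inv: "sq_invertible (length is) (\<lambda>l j. y (ks ! l) (is ! j))"
    using assms(1-4) unfolding generic_def by blast
  obtain x where x: "\<forall>l<length is. (\<Sum>j<length is. y (ks ! l) (is ! j) * x j) = (if l = length is - 1 then 1 else 0)"
    using exR[OF inv] by blast
  have ex: "solR y is ks (map x [0..<length is])"
    unfolding solR_def using x assms(4) by simp
  have uniq: "a = b" if a: "solR y is ks a" and b: "solR y is ks b" for a b
  proof (rule nth_equalityI)
    show "length a = length b" using a b by (simp add: solR_def)
    fix j assume j: "j < length a"
    have "(\<lambda>j. a ! j - b ! j) j = 0"
    proof (rule genR[OF assms])
      show "\<forall>l<length ks. (\<Sum>j<length is. y (ks ! l) (is ! j) * (a ! j - b ! j)) = 0"
        using a b by (simp add: solR_def right_diff_distrib sum_subtractf)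
      show "j < length is" using j a by (simp add: solR_def)
    qed
    then show "a ! j = b ! j" by simp
  qed
  have eq: "coeffR y is ks = (THE a. solR y is ks a)" by (simp add: coeffR_def solR_def)
  have "solR y is ks (THE a. solR y is ks a)"
    by (rule theI[where P="solR y is ks", OF ex]) (rule uniq[OF _ ex])
  then have "solR y is ks (coeffR y is ks)" unfolding eq .
  then show ?thesis using uniq by blast
qed

lemma coeffL_char:
  assumes "generic y" "distinct is" "distinct ks" "length is = length ks"
  shows "solL y is ks (coeffL y is ks) \<and> (\<forall>a. solL y is ks a \<longrightarrow> coeffL y is ks = a)"
proof -
  have inv: "sq_invertible (length is) (\<lambda>l j. y (ks ! l) (is ! j))"
    using assms(1-4) unfolding generic_def by blast
  obtain x where x: "\<forall>j<length is. (\<Sum>l<length is. x l * y (ks ! l) (is ! j)) = (if j = length is - 1 then 1 else 0)"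
    using exL[OF inv] by blast
  have ex: "solL y is ks (map x [0..<length ks])"
    unfolding solL_def using x assms(4) by simp
  have uniq: "a = b" if a: "solL y is ks a" and b: "solL y is ks b" for a b
  proof (rule nth_equalityI)
    show "length a = length b" using a b by (simp add: solL_def)
    fix j assume j: "j < length a"
    have "(\<lambda>j. a ! j - b ! j) j = 0"
    proof (rule genL[OF assms])
      show "\<forall>l<length is. (\<Sum>j<length ks. (a ! j - b ! j) * y (ks ! j) (is ! l)) = 0"
        using a b by (simp add: solL_def left_diff_distrib sum_subtractf)
      show "j < length ks" using j a by (simp add: solL_def)
    qed
    then show "a ! j = b ! j" by simp
  qed
  have eq: "coeffL y is ks = (THE a. solL y is ks a)" by (simp add: coeffL_def solL_def)
  have "solL y is ks (THE a. solL y is ks a)"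
    by (rule theI[where P="solL y is ks", OF ex]) (rule uniq[OF _ ex])
  then have "solL y is ks (coeffL y is ks)" unfolding eq .
  then show ?thesis using uniq by blast
qed


lemma baseR:
  assumes "generic y"
  shows "DeltaR y f [i] [k] = f i * inverse (y k i)"
proof -
  have "length [i] = length [k] \<longrightarrow> distinct [i] \<longrightarrow> distinct [k] \<longrightarrow> sq_invertible (length [i]) (\<lambda>l j. y ([k] ! l) ([i] ! j))"
    using assms unfolding generic_def by blast
  then have "sq_invertible 1 (\<lambda>l j. y ([k] ! l) ([i] ! j))" by simp
  then obtain B where "\<forall>a<1. \<forall>b<1. (\<Sum>c<1. y ([k] ! a) ([i] ! c) * B c b) = (if a = b then 1 else 0)"
    unfolding sq_invertible_def by blast
  then have "y k i * B 0 0 = 1" by simp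
  then have nz: "y k i \<noteq> 0" by auto
  have "solR y [i] [k] [inverse (y k i)]" unfolding solR_def using nz by simp
  then have "coeffR y [i] [k] = [inverse (y k i)]"
    using coeffR_char[OF assms, of "[i]" "[k]"] by simp
  then show ?thesis by (simp add: DeltaR_def)
qed

lemma baseL:
  assumes "generic y"
  shows "DeltaL y g [i] [k] = inverse (y k i) * g k"
proof -
  have "length [i] = length [k] \<longrightarrow> distinct [i] \<longrightarrow> distinct [k] \<longrightarrow> sq_invertible (length [i]) (\<lambda>l j. y ([k] ! l) ([i] ! j))"
    using assms unfolding generic_def by blast
  then have "sq_invertible 1 (\<lambda>l j. y ([k] ! l) ([i] ! j))" by simp
  then obtain B where "\<forall>a<1. \<forall>b<1. (\<Sum>c<1. y ([k] ! a) ([i] ! c) * B c b) = (if a = b then 1 else 0)"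
    unfolding sq_invertible_def by blast
  then have "y k i * B 0 0 = 1" by simp
  then have nz: "y k i \<noteq> 0" by auto
  have "solL y [i] [k] [inverse (y k i)]" unfolding solL_def using nz by simp
  then have "coeffL y [i] [k] = [inverse (y k i)]"
    using coeffL_char[OF assms, of "[i]" "[k]"] by simp
  then show ?thesis by (simp add: DeltaL_def)
qed

lemma stepR:
  assumes gen: "generic y" and len: "length is0 = length ks0"
    and di: "distinct (is0 @ [i, i'])" and dk: "distinct (ks0 @ [k, k'])"
  shows "DeltaR y f (is0 @ [i, i']) (ks0 @ [k, k']) =
          (DeltaR y f (is0 @ [i]) (ks0 @ [k]) - DeltaR y f (is0 @ [i']) (ks0 @ [k])) *
          inverse (DeltaR y (y k') (is0 @ [i]) (ks0 @ [k])
                   - DeltaR y (y k') (is0 @ [i']) (ks0 @ [k]))"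
proof -
  define m where "m = length is0"
  define A where "A = coeffR y (is0 @ [i]) (ks0 @ [k])"
  define A' where "A' = coeffR y (is0 @ [i']) (ks0 @ [k])"
  have sA: "solR y (is0 @ [i]) (ks0 @ [k]) A"
    unfolding A_def using coeffR_char[OF gen, of "is0 @ [i]" "ks0 @ [k]"] di dk len by auto
  have sA': "solR y (is0 @ [i']) (ks0 @ [k]) A'"
    unfolding A'_def using coeffR_char[OF gen, of "is0 @ [i']" "ks0 @ [k]"] di dk len by auto
  have lA: "length A = Suc m" and lA': "length A' = Suc m"
    using sA sA' by (auto simp: solR_def m_def)
  define x where "x = map (\<lambda>j. A ! j - A' ! j) [0..<m] @ [A ! m, - (A' ! m)]"
  have lx: "length x = Suc (Suc m)" by (simp add: x_def)
  have S: "(\<Sum>j<Suc (Suc m). h ((is0 @ [i, i']) ! j) * x ! j) =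
      DeltaR y h (is0 @ [i]) (ks0 @ [k]) - DeltaR y h (is0 @ [i']) (ks0 @ [k])" for h
  proof -
    have e1: "(\<Sum>j<m. h ((is0 @ [i, i']) ! j) * x ! j) =
        (\<Sum>j<m. h (is0 ! j) * A ! j) - (\<Sum>j<m. h (is0 ! j) * A' ! j)"
      by (simp add: x_def nth_append m_def right_diff_distrib sum_subtractf)
    have e2: "(\<Sum>j<m. h ((is0 @ [i]) ! j) * A ! j) = (\<Sum>j<m. h (is0 ! j) * A ! j)"
      by (simp add: nth_append m_def)
    have e3: "(\<Sum>j<m. h ((is0 @ [i']) ! j) * A' ! j) = (\<Sum>j<m. h (is0 ! j) * A' ! j)"
      by (simp add: nth_append m_def)
    have dA: "DeltaR y h (is0 @ [i]) (ks0 @ [k]) = (\<Sum>j<m. h (is0 ! j) * A ! j) + h i * A ! m"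
      using e2 by (simp add: DeltaR_def A_def[symmetric] m_def[symmetric] nth_append)
    have dA': "DeltaR y h (is0 @ [i']) (ks0 @ [k]) = (\<Sum>j<m. h (is0 ! j) * A' ! j) + h i' * A' ! m"
      using e3 by (simp add: DeltaR_def A'_def[symmetric] m_def[symmetric] nth_append)
    have L: "(\<Sum>j<Suc (Suc m). h ((is0 @ [i, i']) ! j) * x ! j) =
       (\<Sum>j<m. h ((is0 @ [i, i']) ! j) * x ! j) + h i * A ! m + h i' * (- (A' ! m))"
      by (simp add: x_def nth_append m_def)
    show ?thesis unfolding L e1 dA dA' by (simp add: algebra_simps)
  qed
  have rows: "(\<Sum>j<Suc (Suc m). y ((ks0 @ [k, k']) ! l) ((is0 @ [i, i']) ! j) * x ! j) = 0"
    if l: "l < Suc m" for l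
  proof -
    have "(ks0 @ [k, k']) ! l = (ks0 @ [k]) ! l" using l len by (simp add: nth_append m_def)
    moreover have "DeltaR y (y ((ks0 @ [k]) ! l)) (is0 @ [i]) (ks0 @ [k]) = (if l = m then 1 else 0)"
      using sA l len unfolding solR_def DeltaR_def A_def[symmetric] by (simp add: m_def)
    moreover have "DeltaR y (y ((ks0 @ [k]) ! l)) (is0 @ [i']) (ks0 @ [k]) = (if l = m then 1 else 0)"
      using sA' l len unfolding solR_def DeltaR_def A'_def[symmetric] by (simp add: m_def)
    ultimately show ?thesis unfolding S by simp
  qed
  define d where "d = DeltaR y (y k') (is0 @ [i]) (ks0 @ [k]) - DeltaR y (y k') (is0 @ [i']) (ks0 @ [k])"
  have dS: "(\<Sum>j<Suc (Suc m). y ((ks0 @ [k, k']) ! Suc m) ((is0 @ [i, i']) ! j) * x ! j) = d"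
    unfolding d_def using S[of "y k'"] len by (simp add: nth_append m_def)
  have dnz: "d \<noteq> 0"
  proof
    assume d0: "d = 0"
    have allrows: "\<forall>l<length (ks0 @ [k, k']). (\<Sum>j<length (is0 @ [i, i']). y ((ks0 @ [k, k']) ! l) ((is0 @ [i, i']) ! j) * x ! j) = 0"
    proof (intro allI impI)
      fix l assume "l < length (ks0 @ [k, k'])"
      then have "l < Suc m \<or> l = Suc m" using len by (auto simp: m_def)
      then show "(\<Sum>j<length (is0 @ [i, i']). y ((ks0 @ [k, k']) ! l) ((is0 @ [i, i']) ! j) * x ! j) = 0"
        using rows dS d0 by (auto simp: m_def)
    qed
    have "(\<lambda>j. x ! j) m = 0"
      by (rule genR[OF gen di dk _ allrows]) (use len in \<open>auto simp: m_def\<close>)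
    then have Am: "A ! m = 0" by (simp add: x_def nth_append)
    have rA: "\<And>l. l < Suc m \<Longrightarrow> (\<Sum>j<Suc m. y ((ks0 @ [k]) ! l) ((is0 @ [i]) ! j) * A ! j) = (if l = m then 1 else 0)"
      using sA len by (simp add: solR_def m_def)
    have red: "(\<Sum>j<Suc m. y r ((is0 @ [i]) ! j) * A ! j) = (\<Sum>j<m. y r (is0 ! j) * A ! j)" for r
      using Am by (simp add: nth_append m_def)
    have zero: "\<forall>l<length ks0. (\<Sum>j<length is0. y (ks0 ! l) (is0 ! j) * A ! j) = 0"
    proof (intro allI impI)
      fix l assume "l < length ks0"
      then show "(\<Sum>j<length is0. y (ks0 ! l) (is0 ! j) * A ! j) = 0"
        using rA[of l] red[of "ks0 ! l"] len by (simp add: nth_append m_def)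
    qed
    have Az: "A ! j = 0" if "j < m" for j
      using genR[OF gen _ _ len zero, of j] di dk that by (simp add: m_def)
    have "(\<Sum>j<Suc m. y ((ks0 @ [k]) ! m) ((is0 @ [i]) ! j) * A ! j) = 0"
      unfolding red using Az by simp
    then show False using rA[of m] by simp
  qed
  define z where "z = map (\<lambda>e. e * inverse d) x"
  have lis: "length (is0 @ [i, i']) = Suc (Suc m)" by (simp add: m_def)
  have sz: "solR y (is0 @ [i, i']) (ks0 @ [k, k']) z"
    unfolding solR_def
  proof (intro conjI allI impI)
    show "length z = length (is0 @ [i, i'])" by (simp add: z_def lx m_def)
    fix l assume l: "l < length (ks0 @ [k, k'])"
    have "(\<Sum>j<length (is0 @ [i, i']). y ((ks0 @ [k, k']) ! l) ((is0 @ [i, i']) ! j) * z ! j)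
        = (\<Sum>j<Suc (Suc m). y ((ks0 @ [k, k']) ! l) ((is0 @ [i, i']) ! j) * x ! j) * inverse d"
      unfolding lis sum_distrib_right by (intro sum.cong refl) (auto simp: z_def lx mult.assoc)
    moreover have "l < Suc m \<or> l = Suc m" using l len by (auto simp: m_def)
    ultimately show "(\<Sum>j<length (is0 @ [i, i']). y ((ks0 @ [k, k']) ! l) ((is0 @ [i, i']) ! j) * z ! j)
        = (if l = length (ks0 @ [k, k']) - 1 then 1 else 0)"
      using rows dS dnz len by (auto simp: m_def)
  qed
  have cz: "coeffR y (is0 @ [i, i']) (ks0 @ [k, k']) = z"
    using coeffR_char[OF gen di dk] sz len by simp
  have "DeltaR y f (is0 @ [i, i']) (ks0 @ [k, k']) =
      (\<Sum>j<Suc (Suc m). f ((is0 @ [i, i']) ! j) * x ! j) * inverse d"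
    unfolding DeltaR_def cz lis sum_distrib_right by (intro sum.cong refl) (auto simp: z_def lx mult.assoc)
  then show ?thesis unfolding S d_def .
qed


lemma stepL:
  assumes gen: "generic y" and len: "length is0 = length ks0"
    and di: "distinct (is0 @ [i, i'])" and dk: "distinct (ks0 @ [k, k'])"
  shows "DeltaL y g (is0 @ [i, i']) (ks0 @ [k, k']) =
          inverse (DeltaL y (\<lambda>r. y r i') (is0 @ [i]) (ks0 @ [k])
                   - DeltaL y (\<lambda>r. y r i') (is0 @ [i]) (ks0 @ [k'])) *
          (DeltaL y g (is0 @ [i]) (ks0 @ [k]) - DeltaL y g (is0 @ [i]) (ks0 @ [k']))"
proof -
  define m where "m = length is0"
  define C where "C = coeffL y (is0 @ [i]) (ks0 @ [k])"
  define C' where "C' = coeffL y (is0 @ [i]) (ks0 @ [k'])"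
  have sC: "solL y (is0 @ [i]) (ks0 @ [k]) C"
    unfolding C_def using coeffL_char[OF gen, of "is0 @ [i]" "ks0 @ [k]"] di dk len by auto
  have sC': "solL y (is0 @ [i]) (ks0 @ [k']) C'"
    unfolding C'_def using coeffL_char[OF gen, of "is0 @ [i]" "ks0 @ [k']"] di dk len by auto
  define x where "x = map (\<lambda>j. C ! j - C' ! j) [0..<m] @ [C ! m, - (C' ! m)]"
  have lx: "length x = Suc (Suc m)" by (simp add: x_def)
  have S: "(\<Sum>l<Suc (Suc m). x ! l * h ((ks0 @ [k, k']) ! l)) =
      DeltaL y h (is0 @ [i]) (ks0 @ [k]) - DeltaL y h (is0 @ [i]) (ks0 @ [k'])" for h
  proof -
    have e1: "(\<Sum>l<m. x ! l * h ((ks0 @ [k, k']) ! l)) =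
        (\<Sum>l<m. C ! l * h (ks0 ! l)) - (\<Sum>l<m. C' ! l * h (ks0 ! l))"
      using len by (simp add: x_def nth_append m_def left_diff_distrib sum_subtractf)
    have e2: "(\<Sum>l<m. C ! l * h ((ks0 @ [k]) ! l)) = (\<Sum>l<m. C ! l * h (ks0 ! l))"
      using len by (simp add: nth_append m_def)
    have e3: "(\<Sum>l<m. C' ! l * h ((ks0 @ [k']) ! l)) = (\<Sum>l<m. C' ! l * h (ks0 ! l))"
      using len by (simp add: nth_append m_def)
    have lk: "length ks0 = m" using len by (simp add: m_def)
    have dA: "DeltaL y h (is0 @ [i]) (ks0 @ [k]) = (\<Sum>l<m. C ! l * h (ks0 ! l)) + C ! m * h k"
      using e2 by (simp add: DeltaL_def C_def[symmetric] lk nth_append)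
    have dA': "DeltaL y h (is0 @ [i]) (ks0 @ [k']) = (\<Sum>l<m. C' ! l * h (ks0 ! l)) + C' ! m * h k'"
      using e3 by (simp add: DeltaL_def C'_def[symmetric] lk nth_append)
    have L: "(\<Sum>l<Suc (Suc m). x ! l * h ((ks0 @ [k, k']) ! l)) =
       (\<Sum>l<m. x ! l * h ((ks0 @ [k, k']) ! l)) + C ! m * h k + (- (C' ! m)) * h k'"
      using lk by (simp add: x_def nth_append)
    show ?thesis unfolding L e1 dA dA' by (simp add: algebra_simps)
  qed
  have cols: "(\<Sum>l<Suc (Suc m). x ! l * y ((ks0 @ [k, k']) ! l) ((is0 @ [i, i']) ! j)) = 0"
    if j: "j < Suc m" for j
  proof -
    have eqj: "(is0 @ [i, i']) ! j = (is0 @ [i]) ! j" using j by (simp add: nth_append m_def)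
    have "DeltaL y (\<lambda>r. y r ((is0 @ [i]) ! j)) (is0 @ [i]) (ks0 @ [k]) = (if j = m then 1 else 0)"
      using sC j len unfolding solL_def DeltaL_def C_def[symmetric] by (simp add: m_def)
    moreover have "DeltaL y (\<lambda>r. y r ((is0 @ [i]) ! j)) (is0 @ [i]) (ks0 @ [k']) = (if j = m then 1 else 0)"
      using sC' j len unfolding solL_def DeltaL_def C'_def[symmetric] by (simp add: m_def)
    ultimately show ?thesis unfolding eqj S[of "\<lambda>r. y r ((is0 @ [i]) ! j)"] by simp
  qed
  define d where "d = DeltaL y (\<lambda>r. y r i') (is0 @ [i]) (ks0 @ [k]) - DeltaL y (\<lambda>r. y r i') (is0 @ [i]) (ks0 @ [k'])"
  have dS: "(\<Sum>l<Suc (Suc m). x ! l * y ((ks0 @ [k, k']) ! l) ((is0 @ [i, i']) ! Suc m)) = d"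
    unfolding d_def using S[of "\<lambda>r. y r i'"] by (simp add: nth_append m_def)
  have dnz: "d \<noteq> 0"
  proof
    assume d0: "d = 0"
    have allcols: "\<forall>j<length (is0 @ [i, i']). (\<Sum>l<length (ks0 @ [k, k']). x ! l * y ((ks0 @ [k, k']) ! l) ((is0 @ [i, i']) ! j)) = 0"
    proof (intro allI impI)
      fix j assume "j < length (is0 @ [i, i'])"
      then have "j < Suc m \<or> j = Suc m" by (auto simp: m_def)
      then show "(\<Sum>l<length (ks0 @ [k, k']). x ! l * y ((ks0 @ [k, k']) ! l) ((is0 @ [i, i']) ! j)) = 0"
        using cols dS d0 len by (auto simp: m_def)
    qed
    have "(\<lambda>l. x ! l) m = 0"
      by (rule genL[OF gen di dk _ allcols]) (use len in \<open>auto simp: m_def\<close>)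
    then have Cm: "C ! m = 0" by (simp add: x_def nth_append)
    have rC: "\<And>j. j < Suc m \<Longrightarrow> (\<Sum>l<Suc m. C ! l * y ((ks0 @ [k]) ! l) ((is0 @ [i]) ! j)) = (if j = m then 1 else 0)"
      using sC len by (simp add: solL_def m_def)
    have red: "(\<Sum>l<Suc m. C ! l * y ((ks0 @ [k]) ! l) c) = (\<Sum>l<m. C ! l * y (ks0 ! l) c)" for c
      using Cm len by (simp add: nth_append m_def)
    have zero: "\<forall>j<length is0. (\<Sum>l<length ks0. C ! l * y (ks0 ! l) (is0 ! j)) = 0"
    proof (intro allI impI)
      fix j assume "j < length is0"
      then show "(\<Sum>l<length ks0. C ! l * y (ks0 ! l) (is0 ! j)) = 0"
        using rC[of j] red[of "is0 ! j"] len by (simp add: nth_append m_def)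
    qed
    have Cz: "C ! l = 0" if "l < m" for l
      using genL[OF gen _ _ len zero, of l] di dk that len by (simp add: m_def)
    have "(\<Sum>l<Suc m. C ! l * y ((ks0 @ [k]) ! l) ((is0 @ [i]) ! m)) = 0"
      unfolding red using Cz by simp
    then show False using rC[of m] by simp
  qed
  define z where "z = map (\<lambda>e. inverse d * e) x"
  have lks: "length (ks0 @ [k, k']) = Suc (Suc m)" using len by (simp add: m_def)
  have sz: "solL y (is0 @ [i, i']) (ks0 @ [k, k']) z"
    unfolding solL_def
  proof (intro conjI allI impI)
    show "length z = length (ks0 @ [k, k'])" using len by (simp add: z_def lx m_def)
    fix j assume j: "j < length (is0 @ [i, i'])"
    have "(\<Sum>l<length (ks0 @ [k, k']). z ! l * y ((ks0 @ [k, k']) ! l) ((is0 @ [i, i']) ! j))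
        = inverse d * (\<Sum>l<Suc (Suc m). x ! l * y ((ks0 @ [k, k']) ! l) ((is0 @ [i, i']) ! j))"
      unfolding lks sum_distrib_left by (intro sum.cong refl) (auto simp: z_def lx mult.assoc)
    moreover have "j < Suc m \<or> j = Suc m" using j by (auto simp: m_def)
    ultimately show "(\<Sum>l<length (ks0 @ [k, k']). z ! l * y ((ks0 @ [k, k']) ! l) ((is0 @ [i, i']) ! j))
        = (if j = length (is0 @ [i, i']) - 1 then 1 else 0)"
      using cols dS dnz by (auto simp: m_def)
  qed
  have cz: "coeffL y (is0 @ [i, i']) (ks0 @ [k, k']) = z"
    using coeffL_char[OF gen di dk] sz len by simp
  have "DeltaL y g (is0 @ [i, i']) (ks0 @ [k, k']) =
      inverse d * (\<Sum>l<Suc (Suc m). x ! l * g ((ks0 @ [k, k']) ! l))"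
    unfolding DeltaL_def cz lks sum_distrib_left by (intro sum.cong refl) (auto simp: z_def lx mult.assoc)
  then show ?thesis unfolding S d_def .
qed


theorem theorem2:
  fixes y :: "nat \<Rightarrow> nat \<Rightarrow> 'a::division_ring" and f g :: "nat \<Rightarrow> 'a"
  assumes gen: "generic y"
  shows
    "(\<forall>i k. DeltaR y f [i] [k] = f i * inverse (y k i))
   \<and> (\<forall>i i' k k'. i \<noteq> i' \<longrightarrow> k \<noteq> k' \<longrightarrow>
        DeltaR y f [i, i'] [k, k'] =
          (DeltaR y f [i] [k] - DeltaR y f [i'] [k]) *
          inverse (DeltaR y (y k') [i] [k] - DeltaR y (y k') [i'] [k]))
   \<and> (\<forall>is0 ks0 i i' k k'. length is0 = length ks0 \<longrightarrow>
        distinct (is0 @ [i, i']) \<longrightarrow> distinct (ks0 @ [k, k']) \<longrightarrow>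
        DeltaR y f (is0 @ [i, i']) (ks0 @ [k, k']) =
          (DeltaR y f (is0 @ [i]) (ks0 @ [k]) - DeltaR y f (is0 @ [i']) (ks0 @ [k])) *
          inverse (DeltaR y (y k') (is0 @ [i]) (ks0 @ [k])
                   - DeltaR y (y k') (is0 @ [i']) (ks0 @ [k])))
   \<and> (\<forall>i k. DeltaL y g [i] [k] = inverse (y k i) * g k)
   \<and> (\<forall>i i' k k'. i \<noteq> i' \<longrightarrow> k \<noteq> k' \<longrightarrow>
        DeltaL y g [i, i'] [k, k'] =
          inverse (DeltaL y (\<lambda>r. y r i') [i] [k] - DeltaL y (\<lambda>r. y r i') [i] [k']) *
          (DeltaL y g [i] [k] - DeltaL y g [i] [k']))
   \<and> (\<forall>is0 ks0 i i' k k'. length is0 = length ks0 \<longrightarrow>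
        distinct (is0 @ [i, i']) \<longrightarrow> distinct (ks0 @ [k, k']) \<longrightarrow>
        DeltaL y g (is0 @ [i, i']) (ks0 @ [k, k']) =
          inverse (DeltaL y (\<lambda>r. y r i') (is0 @ [i]) (ks0 @ [k])
                   - DeltaL y (\<lambda>r. y r i') (is0 @ [i]) (ks0 @ [k'])) *
          (DeltaL y g (is0 @ [i]) (ks0 @ [k]) - DeltaL y g (is0 @ [i]) (ks0 @ [k'])))"
  proof -
  have sR: "DeltaR y f (is0 @ [i, i']) (ks0 @ [k, k']) =
          (DeltaR y f (is0 @ [i]) (ks0 @ [k]) - DeltaR y f (is0 @ [i']) (ks0 @ [k])) *
          inverse (DeltaR y (y k') (is0 @ [i]) (ks0 @ [k])
                   - DeltaR y (y k') (is0 @ [i']) (ks0 @ [k]))"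
    if "length is0 = length ks0" "distinct (is0 @ [i, i'])" "distinct (ks0 @ [k, k'])"
    for is0 ks0 i i' k k' using stepR[OF gen that] .
  have sL: "DeltaL y g (is0 @ [i, i']) (ks0 @ [k, k']) =
          inverse (DeltaL y (\<lambda>r. y r i') (is0 @ [i]) (ks0 @ [k])
                   - DeltaL y (\<lambda>r. y r i') (is0 @ [i]) (ks0 @ [k'])) *
          (DeltaL y g (is0 @ [i]) (ks0 @ [k]) - DeltaL y g (is0 @ [i]) (ks0 @ [k']))"
    if "length is0 = length ks0" "distinct (is0 @ [i, i'])" "distinct (ks0 @ [k, k'])"
    for is0 ks0 i i' k k' using stepL[OF gen that] .
  show ?thesis
  proof (intro conjI allI impI)
    show "DeltaR y f [i] [k] = f i * inverse (y k i)" for i k by (rule baseR[OF gen])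
    show "DeltaL y g [i] [k] = inverse (y k i) * g k" for i k by (rule baseL[OF gen])
    show "DeltaR y f [i, i'] [k, k'] =
          (DeltaR y f [i] [k] - DeltaR y f [i'] [k]) *
          inverse (DeltaR y (y k') [i] [k] - DeltaR y (y k') [i'] [k])"
      if "i \<noteq> i'" "k \<noteq> k'" for i i' k k'
      using sR[of "[]" "[]" i i' k k'] that by simp
    show "DeltaL y g [i, i'] [k, k'] =
          inverse (DeltaL y (\<lambda>r. y r i') [i] [k] - DeltaL y (\<lambda>r. y r i') [i] [k']) *
          (DeltaL y g [i] [k] - DeltaL y g [i] [k'])"
      if "i \<noteq> i'" "k \<noteq> k'" for i i' k k'
      using sL[of "[]" "[]" i i' k k'] that by simp
  qed (use sR sL in auto)
qed

end
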